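(* Let $\mathcal X\subseteq[0,1]$ be a Borel set with $0,1\in\mathcal X$, fix $\mu\in(0,1)$ and let $I_\mu=[(\mu-1)^{-1},\mu^{-1}]$. Let $E=(E_t)_{t\ge0}$ be an e-process for $\bar{\mathcal H}^\infty_\mu$. For $x\in\mathcal X$ let $E^x=(E^x_t)_{t\ge0}$ be the sequence of Borel functions $E^x_t:\mathcal X^t\to[0,+\infty)$ given by $E^x_t(y^t)=E_{t+1}(x,y^t)$ for $t\ge1$ and $E^x_0=E_1(x)$. Then there is $\lambda_1\in I_\mu$ such that for any $\tau\in\mathcal T$, any $Q\in\bar{\mathcal H}^\infty_\mu$ and any $x\in\mathcal X$, $$\mathbb E_Q[E^x_\tau]\le 1+\lambda_1(x-\mu).$$
   Context: $\mathcal X^\infty$ is the space of sequences in $\mathcal X$ with the product sigma-field generated by cylinder sets; $\mathcal F_t$ is generated by the first $t$ coordinates. $\mathcal T$ is the set of finite stopping times: measurable $\tau:\mathcal X^\infty\to\{0,1,2,\dots\}$ with $\{\tau=t\}\in\mathcal F_t$ for all $t\ge0$; for a sequence $g=(g_s)_{s\ge0}$, $g_\tau(y^\infty)=g_{\tau(y^\infty)}(y^{\tau(y^\infty)})$. $\bar{\mathcal H}^\infty_\mu$ is the set of probability measures $Q$ on $\mathcal X^\infty$ such that, for $X^\infty\sim Q$, the law of $X_1$ has mean $\mu$ and support of at most two points, and for every $t\ge2$ the conditional law of $X_t$ given $X^{t-1}$ has mean $\mu$ and is supported on at most two points, $Q$-almost surely. An e-process for $\bar{\mathcal H}^\infty_\mu$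 is a sequence $E=(E_t)_{t\ge0}$ of non-negative Borel functions $E_t:\mathcal X^t\to[0,+\infty)$ ($E_0$ a constant) with $\mathbb E_Q[E_\tau]\le1$ for all $Q\in\bar{\mathcal H}^\infty_\mu$ and all $\tau\in\mathcal T$. *)

theory Defs
  imports "HOL-Probability.Probability"
begin

definition obs_space :: "real set \<Rightarrow> real measure" where
  "obs_space X = restrict_space borel X"

text \<open>X^t: finite prefixes of length t, coordinates 0..t-1 (coordinate i is X_(i+1)).\<close>
definition prefix_space :: "real set \<Rightarrow> nat \<Rightarrow> (nat \<Rightarrow> real) measure" where
  "prefix_space X t = PiM {..<t} (\<lambda>_. obs_space X)"

definition seq_space :: "real set \<Rightarrow> (nat \<Rightarrow> real) measure" where
  "seq_space X = PiM UNIV (\<lambda>_. obs_space X)"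

definition pref :: "nat \<Rightarrow> (nat \<Rightarrow> real) \<Rightarrow> (nat \<Rightarrow> real)" where
  "pref t y = restrict y {..<t}"

definition stopping_times :: "real set \<Rightarrow> ((nat \<Rightarrow> real) \<Rightarrow> nat) set" where
  "stopping_times X = {\<tau>. \<tau> \<in> measurable (seq_space X) (count_space UNIV) \<and>
     (\<forall>t. \<exists>A \<in> sets (prefix_space X t).
        {y \<in> space (seq_space X). \<tau> y = t} = {y \<in> space (seq_space X). pref t y \<in> A})}"

text \<open>The hypothesis class bar H^infinity_mu: the conditional law of X_(t+1) given X^t is
  given by a kernel K t (a regular conditional distribution: the joint law of (X^t, X_(t+1))
  is the law of X^t composed with K t), and Q-a.s. this conditional law has mean mu and is
  supported on at most two points.\<close>
definition hyp_class :: "real set \<Rightarrow> real \<Rightarrow> (nat \<Rightarrow> real) measure set" where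
  "hyp_class X \<mu> = {Q. Q \<in> space (prob_algebra (seq_space X)) \<and>
     (\<exists>K :: nat \<Rightarrow> (nat \<Rightarrow> real) \<Rightarrow> real measure.
        (\<forall>t. K t \<in> prefix_space X t \<rightarrow>\<^sub>M prob_algebra (obs_space X)) \<and>
        (\<forall>t. distr Q (prefix_space X (Suc t)) (pref (Suc t)) =
              bind (distr Q (prefix_space X t) (pref t))
                   (\<lambda>z. distr (K t z) (prefix_space X (Suc t)) (\<lambda>x. z(t := x)))) \<and>
        (\<forall>t. AE y in Q.
              (\<integral>x. x \<partial>(K t (pref t y))) = \<mu> \<and>
              (\<exists>a b. emeasure (K t (pref t y)) (space (obs_space X) - {a, b}) = 0)))}"

definition stopped :: "(nat \<Rightarrow> (nat \<Rightarrow> real) \<Rightarrow> real) \<Rightarrow> ((nat \<Rightarrow> real) \<Rightarrow> nat) \<Rightarrow> (nat \<Rightarrow> real) \<Rightarrow> real" where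
  "stopped g \<tau> y = g (\<tau> y) (pref (\<tau> y) y)"

definition e_process :: "real set \<Rightarrow> real \<Rightarrow> (nat \<Rightarrow> (nat \<Rightarrow> real) \<Rightarrow> real) \<Rightarrow> bool" where
  "e_process X \<mu> E \<longleftrightarrow>
     (\<forall>t. E t \<in> borel_measurable (prefix_space X t)) \<and>
     (\<forall>t. \<forall>z \<in> space (prefix_space X t). 0 \<le> E t z) \<and>
     (\<forall>Q \<in> hyp_class X \<mu>. \<forall>\<tau> \<in> stopping_times X.
        (\<integral>\<^sup>+ y. ennreal (stopped E \<tau> y) \<partial>Q) \<le> 1)"

definition pcons :: "real \<Rightarrow> (nat \<Rightarrow> real) \<Rightarrow> (nat \<Rightarrow> real)" where
  "pcons x y = (\<lambda>i. if i = 0 then x else y (i - 1))"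

definition shifted :: "(nat \<Rightarrow> (nat \<Rightarrow> real) \<Rightarrow> real) \<Rightarrow> real \<Rightarrow> nat \<Rightarrow> (nat \<Rightarrow> real) \<Rightarrow> real" where
  "shifted E x t z = E (Suc t) (pref (Suc t) (pcons x z))"

end

theory Submission
  imports Defs
begin

lemma space_obs[simp]: "space (obs_space X) = X"
  by (simp add: obs_space_def space_restrict_space)

lemma space_prefix: "space (prefix_space X t) = {..<t} \<rightarrow>\<^sub>E X"
  by (simp add: prefix_space_def space_PiM)

lemma space_seq: "space (seq_space X) = UNIV \<rightarrow> X"
  by (auto simp: seq_space_def space_PiM PiE_def extensional_def)

lemma meas_pref[measurable]: "pref t \<in> seq_space X \<rightarrow>\<^sub>M prefix_space X t"
  unfolding pref_def seq_space_def prefix_space_def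
  by (rule measurable_restrict_subset) auto

lemma meas_stopped:
  assumes "\<tau> \<in> stopping_times X" "\<And>t. E t \<in> borel_measurable (prefix_space X t)"
  shows "stopped E \<tau> \<in> borel_measurable (seq_space X)"
proof -
  have "(\<lambda>y. (\<lambda>t y. E t (pref t y)) (\<tau> y) y) \<in> borel_measurable (seq_space X)"
    apply (rule measurable_compose_countable)
    using assms by (auto simp: stopping_times_def intro: measurable_compose[OF meas_pref])
  then show ?thesis unfolding stopped_def by simp
qed

definition sh :: "(nat \<Rightarrow> real) \<Rightarrow> (nat \<Rightarrow> real)" where
  "sh y = (\<lambda>i. y (Suc i))"

lemma meas_sh[measurable]: "sh \<in> seq_space X \<rightarrow>\<^sub>M seq_space X"
  unfolding sh_def seq_space_def
  by (rule measurable_abs_UNIV) (rule measurable_component_singleton, simp)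

lemma meas_pcons[measurable]: "c \<in> X \<Longrightarrow> pcons c \<in> seq_space X \<rightarrow>\<^sub>M seq_space X"
  unfolding pcons_def seq_space_def
  apply (rule measurable_abs_UNIV)
  subgoal for n by (cases n) (auto intro: measurable_component_singleton)
  done

lemma sh_pcons[simp]: "sh (pcons c y) = y"
  by (simp add: sh_def pcons_def)

lemma pcons_0[simp]: "pcons c y 0 = c"
  by (simp add: pcons_def)


lemma singleton_obs: "a \<in> X \<Longrightarrow> {a} \<in> sets (obs_space X)"
  unfolding obs_space_def by (auto simp: sets_restrict_space image_iff intro!: bexI[of _ "{a}"])

lemma pred_coord:
  assumes "a \<in> X" "i \<in> I"
  shows "{y \<in> space (PiM I (\<lambda>_. obs_space X)). y i = a} \<in> sets (PiM I (\<lambda>_. obs_space X))"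
proof -
  have "{y \<in> space (PiM I (\<lambda>_. obs_space X)). y i = a} = (\<lambda>y. y i) -` {a} \<inter> space (PiM I (\<lambda>_. obs_space X))"
    by auto
  also have "\<dots> \<in> sets (PiM I (\<lambda>_. obs_space X))"
    by (rule measurable_sets[OF measurable_component_singleton[OF assms(2)] singleton_obs[OF assms(1)]])
  finally show ?thesis .
qed

definition shp :: "nat \<Rightarrow> (nat \<Rightarrow> real) \<Rightarrow> (nat \<Rightarrow> real)" where
  "shp s z = (\<lambda>i\<in>{..<s}. z (Suc i))"

lemma meas_shp[measurable]: "shp s \<in> prefix_space X (Suc s) \<rightarrow>\<^sub>M prefix_space X s"
  unfolding shp_def prefix_space_def
  by (rule measurable_restrict) (rule measurable_component_singleton, simp)

lemma pref_sh: "pref s (sh y) = shp s (pref (Suc s) y)"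
  by (auto simp: pref_def shp_def sh_def)

definition tmix :: "real \<Rightarrow> ((nat \<Rightarrow> real) \<Rightarrow> nat) \<Rightarrow> ((nat \<Rightarrow> real) \<Rightarrow> nat) \<Rightarrow> (nat \<Rightarrow> real) \<Rightarrow> nat" where
  "tmix a ta tb y = Suc (if y 0 = a then ta (sh y) else tb (sh y))"

lemma st_meas: "\<tau> \<in> stopping_times X \<Longrightarrow> \<tau> \<in> seq_space X \<rightarrow>\<^sub>M count_space UNIV"
  by (simp add: stopping_times_def)

lemma tmix_st:
  assumes a: "a \<in> X" and ta: "ta \<in> stopping_times X" and tb: "tb \<in> stopping_times X"
  shows "tmix a ta tb \<in> stopping_times X"
proof -
  have P0: "{y \<in> space (seq_space X). y 0 = a} \<in> sets (seq_space X)"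
    unfolding seq_space_def by (rule pred_coord[OF a]) auto
  have m1: "(\<lambda>y. if y 0 = a then ta (sh y) else tb (sh y)) \<in> seq_space X \<rightarrow>\<^sub>M count_space UNIV"
    by (rule measurable_If[OF measurable_compose[OF meas_sh st_meas[OF ta]] measurable_compose[OF meas_sh st_meas[OF tb]] P0])
  have m: "tmix a ta tb \<in> seq_space X \<rightarrow>\<^sub>M count_space UNIV"
    unfolding tmix_def by (rule measurable_compose[OF m1]) simp
  have "\<exists>A \<in> sets (prefix_space X t).
        {y \<in> space (seq_space X). tmix a ta tb y = t} = {y \<in> space (seq_space X). pref t y \<in> A}" for t
  proof (cases t)
    case 0
    then show ?thesis by (auto simp: tmix_def intro!: bexI[of _ "{}"])
  next
    case (Suc s)
    obtain Aa where Aa: "Aa \<in> sets (prefix_space X s)"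
      "{y \<in> space (seq_space X). ta y = s} = {y \<in> space (seq_space X). pref s y \<in> Aa}"
      using ta unfolding stopping_times_def by blast
    obtain Ab where Ab: "Ab \<in> sets (prefix_space X s)"
      "{y \<in> space (seq_space X). tb y = s} = {y \<in> space (seq_space X). pref s y \<in> Ab}"
      using tb unfolding stopping_times_def by blast
    let ?sp = "space (prefix_space X (Suc s))"
    let ?Z = "{z \<in> ?sp. z 0 = a}"
    define A where "A = (?Z \<inter> (shp s -` Aa \<inter> ?sp)) \<union> ((?sp - ?Z) \<inter> (shp s -` Ab \<inter> ?sp))"
    have Z: "?Z \<in> sets (prefix_space X (Suc s))"
      unfolding prefix_space_def by (rule pred_coord[OF a]) auto
    have A: "A \<in> sets (prefix_space X (Suc s))"
      unfolding A_def using Z measurable_sets[OF meas_shp Aa(1)] measurable_sets[OF meas_shp Ab(1)]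
      by auto
    have "{y \<in> space (seq_space X). tmix a ta tb y = t} = {y \<in> space (seq_space X). pref t y \<in> A}"
    proof (intro Collect_cong conj_cong refl)
      fix y assume y: "y \<in> space (seq_space X)"
      have shy: "sh y \<in> space (seq_space X)" using measurable_space[OF meas_sh y] .
      have py: "pref (Suc s) y \<in> ?sp" using measurable_space[OF meas_pref y] .
      have ea: "ta (sh y) = s \<longleftrightarrow> pref s (sh y) \<in> Aa" using Aa(2) shy by blast
      have eb: "tb (sh y) = s \<longleftrightarrow> pref s (sh y) \<in> Ab" using Ab(2) shy by blast
      have p0: "pref (Suc s) y 0 = y 0" by (simp add: pref_def)
      have "pref t y \<in> A \<longleftrightarrow> (y 0 = a \<and> shp s (pref (Suc s) y) \<in> Aa) \<or> (y 0 \<noteq> a \<and> shp s (pref (Suc s) y) \<in> Ab)"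
        unfolding A_def Suc using py p0 by simp
      moreover have "tmix a ta tb y = t \<longleftrightarrow> (y 0 = a \<and> ta (sh y) = s) \<or> (y 0 \<noteq> a \<and> tb (sh y) = s)"
        unfolding Suc tmix_def by simp
      ultimately show "tmix a ta tb y = t \<longleftrightarrow> pref t y \<in> A"
        using ea eb unfolding pref_sh by blast
    qed
    moreover have "A \<in> sets (prefix_space X t)" using A Suc by simp
    ultimately show ?thesis by (rule bexI)
  qed
  then show ?thesis using m unfolding stopping_times_def by blast
qed


lemma meas_pmf: "(\<And>c. f c \<in> space N) \<Longrightarrow> f \<in> measurable (measure_pmf P) N"
  by (subst measurable_cong_sets[OF sets_measure_pmf_count_space refl]) auto

lemma meas_upd: "(\<lambda>(z,x). z(t:=x)) \<in> prefix_space X t \<Otimes>\<^sub>M obs_space X \<rightarrow>\<^sub>M prefix_space X (Suc t)"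
proof -
  have "{..<Suc t} = insert t {..<t}" by auto
  then show ?thesis unfolding prefix_space_def
    using measurable_add_dim[of t "{..<t}" "\<lambda>_. obs_space X"] by simp
qed

lemma meas_F: "Kt \<in> prefix_space X t \<rightarrow>\<^sub>M prob_algebra (obs_space X) \<Longrightarrow>
  (\<lambda>z. distr (Kt z) (prefix_space X (Suc t)) (\<lambda>x. z(t:=x))) \<in> prefix_space X t \<rightarrow>\<^sub>M prob_algebra (prefix_space X (Suc t))"
  by (rule measurable_distr_prob_space2[OF _ meas_upd])

definition pc :: "nat \<Rightarrow> real \<Rightarrow> (nat \<Rightarrow> real) \<Rightarrow> (nat \<Rightarrow> real)" where
  "pc n d z = restrict (pcons d z) {..<n}"

lemma pref_pcons: "pref (Suc n) (pcons d y) = pc (Suc n) d (pref n y)"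
  by (auto simp: pref_def pc_def pcons_def fun_eq_iff)

lemma meas_pc: "d \<in> X \<Longrightarrow> pc (Suc n) d \<in> prefix_space X n \<rightarrow>\<^sub>M prefix_space X (Suc n)"
  unfolding pc_def pcons_def prefix_space_def
  apply (rule measurable_restrict)
  subgoal for i by (cases i) (auto intro: measurable_component_singleton)
  done

lemma shp_pc: "z \<in> space (prefix_space X s) \<Longrightarrow> shp s (pc (Suc s) d z) = z"
  by (auto simp: shp_def pc_def pcons_def space_prefix PiE_def extensional_def fun_eq_iff)

lemma pc_upd: "(pc (Suc s) d z)(Suc s := x) = pc (Suc (Suc s)) d (z(s:=x))"
  by (auto simp: pc_def pcons_def fun_eq_iff)

lemma pref_pcons_shifted: "pref (Suc t) (pcons c (pref t w)) = pref (Suc t) (pcons c w)"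
  by (auto simp: pref_def pcons_def fun_eq_iff)

lemma hyp_class_D:
  assumes "Q \<in> hyp_class X \<mu>"
  shows "\<exists>K. Q \<in> space (prob_algebra (seq_space X)) \<and>
        (\<forall>t. K t \<in> prefix_space X t \<rightarrow>\<^sub>M prob_algebra (obs_space X)) \<and>
        (\<forall>t. distr Q (prefix_space X (Suc t)) (pref (Suc t)) =
              bind (distr Q (prefix_space X t) (pref t))
                   (\<lambda>z. distr (K t z) (prefix_space X (Suc t)) (\<lambda>x. z(t := x)))) \<and>
        (\<forall>t. AE y in Q.
              (\<integral>x. x \<partial>(K t (pref t y))) = \<mu> \<and>
              (\<exists>a b. emeasure (K t (pref t y)) (space (obs_space X) - {a, b}) = 0))"
  using assms unfolding hyp_class_def by blast

definition good :: "real set \<Rightarrow> real \<Rightarrow> real measure \<Rightarrow> bool" where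
  "good X \<mu> M \<longleftrightarrow> (\<integral>x. x \<partial>M) = \<mu> \<and> (\<exists>a b. emeasure M (space (obs_space X) - {a, b}) = 0)"

context
  fixes X :: "real set" and \<mu> a b :: real and P :: "real pmf"
    and Qf :: "real \<Rightarrow> (nat \<Rightarrow> real) measure"
    and Kf :: "real \<Rightarrow> nat \<Rightarrow> (nat \<Rightarrow> real) \<Rightarrow> real measure"
    and \<tau>f :: "real \<Rightarrow> (nat \<Rightarrow> real) \<Rightarrow> nat"
  assumes a: "a \<in> X" and b: "b \<in> X" and supp: "set_pmf P \<subseteq> {a, b}"
    and mean: "(\<integral>c. c \<partial>measure_pmf P) = \<mu>"
    and Qin: "\<And>c. c \<in> {a,b} \<Longrightarrow> Qf c \<in> space (prob_algebra (seq_space X))"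
    and Kmeas: "\<And>c t. c \<in> {a,b} \<Longrightarrow> Kf c t \<in> prefix_space X t \<rightarrow>\<^sub>M prob_algebra (obs_space X)"
    and Keq: "\<And>c t. c \<in> {a,b} \<Longrightarrow> distr (Qf c) (prefix_space X (Suc t)) (pref (Suc t)) =
              bind (distr (Qf c) (prefix_space X t) (pref t))
                   (\<lambda>z. distr (Kf c t z) (prefix_space X (Suc t)) (\<lambda>x. z(t := x)))"
    and Kae: "\<And>c t. c \<in> {a,b} \<Longrightarrow> AE y in Qf c. good X \<mu> (Kf c t (pref t y))"
    and tst: "\<And>c. c \<in> {a,b} \<Longrightarrow> \<tau>f c \<in> stopping_times X"
begin

definition "gg c = (if c = b then b else a)"
definition "NN c = distr (Qf (gg c)) (seq_space X) (pcons (gg c))"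
definition "QQ = measure_pmf P \<bind> NN"

lemma gg_in: "gg c \<in> {a,b}" by (simp add: gg_def)
lemma gg_X: "gg c \<in> X" using a b by (simp add: gg_def)
lemma gg_supp: "c \<in> set_pmf P \<Longrightarrow> gg c = c" using supp by (auto simp: gg_def)

lemma sets_Qf: "c \<in> {a,b} \<Longrightarrow> sets (Qf c) = sets (seq_space X)"
  using Qin by (simp add: space_prob_algebra)
lemma prob_Qf: "c \<in> {a,b} \<Longrightarrow> prob_space (Qf c)"
  using Qin by (simp add: space_prob_algebra)

lemma NN_in: "NN c \<in> space (prob_algebra (seq_space X))"
proof -
  have m: "pcons (gg c) \<in> Qf (gg c) \<rightarrow>\<^sub>M seq_space X"
    using meas_pcons[OF gg_X] measurable_cong_sets[OF sets_Qf[OF gg_in] refl] by blast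
  show ?thesis unfolding NN_def space_prob_algebra
    using prob_space.prob_space_distr[OF prob_Qf[OF gg_in] m] by simp
qed

lemma NN_meas: "NN \<in> measure_pmf P \<rightarrow>\<^sub>M prob_algebra (seq_space X)"
  by (rule meas_pmf) (rule NN_in)

lemma NN_meas': "NN \<in> measure_pmf P \<rightarrow>\<^sub>M subprob_algebra (seq_space X)"
  by (rule measurable_prob_algebraD[OF NN_meas])

lemma P_in: "measure_pmf P \<in> space (prob_algebra (measure_pmf P))"
  by (simp add: space_prob_algebra prob_space_measure_pmf)

lemma QQ_in: "QQ \<in> space (prob_algebra (seq_space X))"
  unfolding QQ_def space_prob_algebra
  using prob_space_bind'[OF P_in NN_meas] sets_bind'[OF P_in NN_meas] by simp

lemma sets_QQ: "sets QQ = sets (seq_space X)" using QQ_in by (simp add: space_prob_algebra)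
lemma prob_QQ: "prob_space QQ" using QQ_in by (simp add: space_prob_algebra)


lemma pcons_meas_Q: "pcons (gg c) \<in> Qf (gg c) \<rightarrow>\<^sub>M seq_space X"
  using meas_pcons[OF gg_X] measurable_cong_sets[OF sets_Qf[OF gg_in] refl] by blast

lemma pref_meas_Q: "c \<in> {a,b} \<Longrightarrow> pref n \<in> Qf c \<rightarrow>\<^sub>M prefix_space X n"
  using meas_pref measurable_cong_sets[OF sets_Qf refl] by blast

lemma distr_NN: "distr (NN c) (prefix_space X (Suc n)) (pref (Suc n)) =
   distr (distr (Qf (gg c)) (prefix_space X n) (pref n)) (prefix_space X (Suc n)) (pc (Suc n) (gg c))"
proof -
  have "distr (NN c) (prefix_space X (Suc n)) (pref (Suc n)) =
      distr (Qf (gg c)) (prefix_space X (Suc n)) (pref (Suc n) \<circ> pcons (gg c))"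
    unfolding NN_def by (rule distr_distr[OF meas_pref pcons_meas_Q])
  also have "pref (Suc n) \<circ> pcons (gg c) = pc (Suc n) (gg c) \<circ> pref n"
    by (auto simp: pref_pcons)
  also have "distr (Qf (gg c)) (prefix_space X (Suc n)) (pc (Suc n) (gg c) \<circ> pref n) =
     distr (distr (Qf (gg c)) (prefix_space X n) (pref n)) (prefix_space X (Suc n)) (pc (Suc n) (gg c))"
    by (rule distr_distr[symmetric, OF meas_pc[OF gg_X] pref_meas_Q[OF gg_in]])
  finally show ?thesis .
qed

lemma distr_QQ: "distr QQ (prefix_space X n) (pref n) = measure_pmf P \<bind> (\<lambda>c. distr (NN c) (prefix_space X n) (pref n))"
  unfolding QQ_def by (rule distr_bind[OF NN_meas' _ meas_pref]) simp

definition "K0 = distr (measure_pmf P) (obs_space X) gg"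
definition "KK t z = (case t of 0 \<Rightarrow> K0 | Suc s \<Rightarrow> if z 0 = a then Kf a s (shp s z) else Kf b s (shp s z))"

lemma gg_meas: "gg \<in> measure_pmf P \<rightarrow>\<^sub>M obs_space X"
  by (rule meas_pmf) (simp add: gg_X)

lemma K0_in: "K0 \<in> space (prob_algebra (obs_space X))"
  unfolding K0_def space_prob_algebra
  using prob_space.prob_space_distr[OF prob_space_measure_pmf gg_meas] by simp

lemma KK_meas: "KK t \<in> prefix_space X t \<rightarrow>\<^sub>M prob_algebra (obs_space X)"
proof (cases t)
  case 0
  then show ?thesis unfolding KK_def using K0_in by simp
next
  case (Suc s)
  have Z: "{z \<in> space (prefix_space X (Suc s)). z 0 = a} \<in> sets (prefix_space X (Suc s))"
    unfolding prefix_space_def by (rule pred_coord[OF a]) auto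
  have "(\<lambda>z. if z 0 = a then Kf a s (shp s z) else Kf b s (shp s z)) \<in> prefix_space X (Suc s) \<rightarrow>\<^sub>M prob_algebra (obs_space X)"
    by (rule measurable_If[OF measurable_compose[OF meas_shp Kmeas] measurable_compose[OF meas_shp Kmeas] Z]) auto
  then show ?thesis unfolding KK_def Suc by simp
qed

lemma pref0: "pref 0 = (\<lambda>_. (\<lambda>_. undefined))"
  by (auto simp: pref_def fun_eq_iff)

lemma u0_space: "(\<lambda>_. undefined) \<in> space (prefix_space X 0)"
  by (simp add: space_prefix)

lemma distr_pref0: "prob_space Q \<Longrightarrow> distr Q (prefix_space X 0) (pref 0) = return (prefix_space X 0) (\<lambda>_. undefined)"
  unfolding pref0 by (rule prob_space.distr_const[OF _ u0_space])

lemma meas_upd1: "z \<in> space (prefix_space X t) \<Longrightarrow> (\<lambda>x. z(t:=x)) \<in> obs_space X \<rightarrow>\<^sub>M prefix_space X (Suc t)"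
proof -
  assume z: "z \<in> space (prefix_space X t)"
  have "{..<Suc t} = insert t {..<t}" by auto
  then show ?thesis using z unfolding prefix_space_def
    using measurable_component_update[of z "{..<t}" "\<lambda>_. obs_space X" t] by simp
qed

lemma eq0: "distr QQ (prefix_space X (Suc 0)) (pref (Suc 0)) =
    bind (distr QQ (prefix_space X 0) (pref 0))
      (\<lambda>z. distr (KK 0 z) (prefix_space X (Suc 0)) (\<lambda>x. z(0 := x)))"
proof -
  let ?u = "(\<lambda>_. undefined) :: nat \<Rightarrow> real"
  have "distr QQ (prefix_space X (Suc 0)) (pref (Suc 0)) =
     measure_pmf P \<bind> (\<lambda>c. distr (NN c) (prefix_space X (Suc 0)) (pref (Suc 0)))"
    by (rule distr_QQ)
  also have "\<dots> = measure_pmf P \<bind> (\<lambda>c. return (prefix_space X (Suc 0)) (?u(0 := gg c)))"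
  proof (rule bind_cong[OF refl])
    fix c
    have "distr (NN c) (prefix_space X (Suc 0)) (pref (Suc 0)) =
       distr (return (prefix_space X 0) ?u) (prefix_space X (Suc 0)) (pc (Suc 0) (gg c))"
      unfolding distr_NN distr_pref0[OF prob_Qf[OF gg_in]] ..
    also have "\<dots> = return (prefix_space X (Suc 0)) (pc (Suc 0) (gg c) ?u)"
      by (rule distr_return[OF meas_pc[OF gg_X] u0_space])
    also have "pc (Suc 0) (gg c) ?u = ?u(0 := gg c)"
      by (auto simp: pc_def pcons_def fun_eq_iff)
    finally show "distr (NN c) (prefix_space X (Suc 0)) (pref (Suc 0)) = return (prefix_space X (Suc 0)) (?u(0 := gg c))" .
  qed
  also have "\<dots> = distr (measure_pmf P) (prefix_space X (Suc 0)) ((\<lambda>x. ?u(0:=x)) \<circ> gg)"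
    unfolding comp_def
    by (rule bind_return_distr') (auto intro!: meas_pmf measurable_space[OF meas_upd1[OF u0_space]] simp: gg_X)
  also have "\<dots> = distr K0 (prefix_space X (Suc 0)) (\<lambda>x. ?u(0 := x))"
    unfolding K0_def by (rule distr_distr[symmetric, OF meas_upd1[OF u0_space] gg_meas])
  also have "\<dots> = bind (return (prefix_space X 0) ?u)
      (\<lambda>z. distr (KK 0 z) (prefix_space X (Suc 0)) (\<lambda>x. z(0 := x)))"
    by (subst bind_return[OF measurable_prob_algebraD[OF meas_F[OF KK_meas]] u0_space]) (simp add: KK_def)
  also have "return (prefix_space X 0) ?u = distr QQ (prefix_space X 0) (pref 0)"
    by (rule distr_pref0[symmetric, OF prob_QQ])
  finally show ?thesis .
qed


lemma sets_Kf: "c \<in> {a,b} \<Longrightarrow> z \<in> space (prefix_space X t) \<Longrightarrow> sets (Kf c t z) = sets (obs_space X)"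
  using measurable_space[OF Kmeas] by (auto simp: space_prob_algebra)

lemma Fd_meas: "c \<in> {a,b} \<Longrightarrow> (\<lambda>z. distr (Kf c t z) (prefix_space X (Suc t)) (\<lambda>x. z(t:=x)))
   \<in> distr Q (prefix_space X t) f \<rightarrow>\<^sub>M subprob_algebra (prefix_space X (Suc t))"
  using measurable_prob_algebraD[OF meas_F[OF Kmeas]] by (simp cong: measurable_cong_sets)

lemma space_distr_ne: "c \<in> {a,b} \<Longrightarrow> space (distr (Qf c) (prefix_space X t) (pref t)) \<noteq> {}"
proof -
  assume c: "c \<in> {a,b}"
  have "space (Qf c) \<noteq> {}" using prob_Qf[OF c] prob_space.not_empty by blast
  then obtain y where "y \<in> space (Qf c)" by blast
  then have "pref t y \<in> space (prefix_space X t)" using measurable_space[OF pref_meas_Q[OF c]] by blast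
  then show ?thesis by auto
qed

lemma lhs_Suc: "c \<in> {a,b} \<Longrightarrow> distr (distr (Qf c) (prefix_space X (Suc s)) (pref (Suc s))) (prefix_space X (Suc (Suc s))) (pc (Suc (Suc s)) c)
  = distr (Qf c) (prefix_space X s) (pref s) \<bind>
     (\<lambda>z. distr (Kf c s z) (prefix_space X (Suc (Suc s))) (\<lambda>x. pc (Suc (Suc s)) c (z(s:=x))))"
proof -
  assume c: "c \<in> {a,b}"
  have cX: "c \<in> X" using c a b by auto
  have "distr (distr (Qf c) (prefix_space X (Suc s)) (pref (Suc s))) (prefix_space X (Suc (Suc s))) (pc (Suc (Suc s)) c)
     = distr (distr (Qf c) (prefix_space X s) (pref s) \<bind>
          (\<lambda>z. distr (Kf c s z) (prefix_space X (Suc s)) (\<lambda>x. z(s := x)))) (prefix_space X (Suc (Suc s))) (pc (Suc (Suc s)) c)"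
    using Keq[OF c] by simp
  also have "\<dots> = distr (Qf c) (prefix_space X s) (pref s) \<bind>
          (\<lambda>z. distr (distr (Kf c s z) (prefix_space X (Suc s)) (\<lambda>x. z(s := x))) (prefix_space X (Suc (Suc s))) (pc (Suc (Suc s)) c))"
    by (rule distr_bind[OF Fd_meas[OF c] space_distr_ne[OF c] meas_pc[OF cX]])
  also have "\<dots> = distr (Qf c) (prefix_space X s) (pref s) \<bind>
     (\<lambda>z. distr (Kf c s z) (prefix_space X (Suc (Suc s))) (\<lambda>x. pc (Suc (Suc s)) c (z(s:=x))))"
  proof (rule bind_cong[OF refl])
    fix z assume "z \<in> space (distr (Qf c) (prefix_space X s) (pref s))"
    then have z: "z \<in> space (prefix_space X s)" by simp
    have mu: "(\<lambda>x. z(s := x)) \<in> Kf c s z \<rightarrow>\<^sub>M prefix_space X (Suc s)"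
      using meas_upd1[OF z] measurable_cong_sets[OF sets_Kf[OF c z] refl] by blast
    show "distr (distr (Kf c s z) (prefix_space X (Suc s)) (\<lambda>x. z(s := x))) (prefix_space X (Suc (Suc s))) (pc (Suc (Suc s)) c)
       = distr (Kf c s z) (prefix_space X (Suc (Suc s))) (\<lambda>x. pc (Suc (Suc s)) c (z(s:=x)))"
      using distr_distr[OF meas_pc[OF cX] mu] by (simp add: comp_def)
  qed
  finally show ?thesis .
qed

lemma eqSuc: "distr QQ (prefix_space X (Suc (Suc s))) (pref (Suc (Suc s))) =
    bind (distr QQ (prefix_space X (Suc s)) (pref (Suc s)))
      (\<lambda>z. distr (KK (Suc s) z) (prefix_space X (Suc (Suc s))) (\<lambda>x. z(Suc s := x)))"
proof -
  define G where "G c = distr (Qf c) (prefix_space X s) (pref s) \<bind>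
     (\<lambda>z. distr (Kf c s z) (prefix_space X (Suc (Suc s))) (\<lambda>x. pc (Suc (Suc s)) c (z(s:=x))))" for c
  define F' where "F' z = distr (KK (Suc s) z) (prefix_space X (Suc (Suc s))) (\<lambda>x. z(Suc s := x))" for z
  have F'm: "F' \<in> prefix_space X (Suc s) \<rightarrow>\<^sub>M subprob_algebra (prefix_space X (Suc (Suc s)))"
    unfolding F'_def by (rule measurable_prob_algebraD[OF meas_F[OF KK_meas]])
  have "distr QQ (prefix_space X (Suc (Suc s))) (pref (Suc (Suc s))) = measure_pmf P \<bind> (\<lambda>c. G (gg c))"
    unfolding distr_QQ
  proof (rule bind_cong[OF refl])
    fix c show "distr (NN c) (prefix_space X (Suc (Suc s))) (pref (Suc (Suc s))) = G (gg c)"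
      unfolding distr_NN G_def by (rule lhs_Suc[OF gg_in])
  qed
  moreover have "bind (distr QQ (prefix_space X (Suc s)) (pref (Suc s))) F' = measure_pmf P \<bind> (\<lambda>c. G (gg c))"
  proof -
    have A: "(\<lambda>c. distr (NN c) (prefix_space X (Suc s)) (pref (Suc s))) \<in> measure_pmf P \<rightarrow>\<^sub>M subprob_algebra (prefix_space X (Suc s))"
    proof (rule measurable_prob_algebraD, rule meas_pmf)
      fix c
      have pN: "prob_space (NN c)" and sN: "sets (NN c) = sets (seq_space X)"
        using NN_in[of c] by (auto simp: space_prob_algebra)
      have "pref (Suc s) \<in> NN c \<rightarrow>\<^sub>M prefix_space X (Suc s)"
        using meas_pref measurable_cong_sets[OF sN refl] by blast
      then show "distr (NN c) (prefix_space X (Suc s)) (pref (Suc s)) \<in> space (prob_algebra (prefix_space X (Suc s)))"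
        using prob_space.prob_space_distr[OF pN] by (simp add: space_prob_algebra)
    qed
    have "bind (distr QQ (prefix_space X (Suc s)) (pref (Suc s))) F' =
       measure_pmf P \<bind> (\<lambda>c. distr (NN c) (prefix_space X (Suc s)) (pref (Suc s)) \<bind> F')"
      unfolding distr_QQ by (rule bind_assoc[OF A F'm])
    also have "\<dots> = measure_pmf P \<bind> (\<lambda>c. G (gg c))"
    proof (rule bind_cong[OF refl])
      fix c
      let ?d = "gg c"
      have dX: "?d \<in> X" by (rule gg_X)
      have pcm: "pc (Suc s) ?d \<in> distr (Qf ?d) (prefix_space X s) (pref s) \<rightarrow>\<^sub>M prefix_space X (Suc s)"
        using meas_pc[OF dX] by (simp cong: measurable_cong_sets)
      have "distr (NN c) (prefix_space X (Suc s)) (pref (Suc s)) \<bind> F' =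
         distr (distr (Qf ?d) (prefix_space X s) (pref s)) (prefix_space X (Suc s)) (pc (Suc s) ?d) \<bind> F'"
        unfolding distr_NN ..
      also have "\<dots> = distr (Qf ?d) (prefix_space X s) (pref s) \<bind> (\<lambda>z. F' (pc (Suc s) ?d z))"
        by (rule bind_distr[OF pcm F'm space_distr_ne[OF gg_in]])
      also have "\<dots> = G ?d"
        unfolding G_def
      proof (rule bind_cong[OF refl])
        fix z assume "z \<in> space (distr (Qf ?d) (prefix_space X s) (pref s))"
        then have z: "z \<in> space (prefix_space X s)" by simp
        have "KK (Suc s) (pc (Suc s) ?d z) = Kf ?d s z"
          using shp_pc[OF z] gg_in[of c] by (auto simp: KK_def pc_def pcons_def)
        then show "F' (pc (Suc s) ?d z) = distr (Kf ?d s z) (prefix_space X (Suc (Suc s))) (\<lambda>x. pc (Suc (Suc s)) ?d (z(s:=x)))"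
          unfolding F'_def pc_upd by simp
      qed
      finally show "distr (NN c) (prefix_space X (Suc s)) (pref (Suc s)) \<bind> F' = G (gg c)" .
    qed
    finally show ?thesis .
  qed
  ultimately show ?thesis unfolding F'_def by simp
qed


lemma eqAll: "distr QQ (prefix_space X (Suc t)) (pref (Suc t)) =
    bind (distr QQ (prefix_space X t) (pref t))
      (\<lambda>z. distr (KK t z) (prefix_space X (Suc t)) (\<lambda>x. z(t := x)))"
  by (cases t) (simp_all only: eq0 eqSuc)

lemma pcons_sh: "pcons (y 0) (sh y) = y"
  by (auto simp: pcons_def sh_def fun_eq_iff)

lemma space_Qf: "c \<in> {a,b} \<Longrightarrow> space (Qf c) = space (seq_space X)"
  using sets_Qf sets_eq_imp_space_eq by blast

lemma AE_QQ:
  assumes Ra: "AE w in Qf a. R (pcons a w)" and Rb: "AE w in Qf b. R (pcons b w)"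
  shows "AE y in QQ. R y"
proof -
  obtain Na where Na: "{w \<in> space (Qf a). \<not> R (pcons a w)} \<subseteq> Na" "emeasure (Qf a) Na = 0" "Na \<in> sets (Qf a)"
    using Ra by (rule AE_E)
  obtain Nb where Nb: "{w \<in> space (Qf b). \<not> R (pcons b w)} \<subseteq> Nb" "emeasure (Qf b) Nb = 0" "Nb \<in> sets (Qf b)"
    using Rb by (rule AE_E)
  let ?S = "space (seq_space X)"
  define Za where "Za = {y \<in> ?S. y 0 = a}"
  define Zb where "Zb = {y \<in> ?S. y 0 = b}"
  define B where "B = (Za \<inter> (sh -` Na \<inter> ?S)) \<union> ((Zb - Za) \<inter> (sh -` Nb \<inter> ?S)) \<union> (?S - (Za \<union> Zb))"
  have Za: "Za \<in> sets (seq_space X)" unfolding Za_def seq_space_def by (rule pred_coord[OF a]) auto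
  have Zb: "Zb \<in> sets (seq_space X)" unfolding Zb_def seq_space_def by (rule pred_coord[OF b]) auto
  have Na': "Na \<in> sets (seq_space X)" using Na(3) sets_Qf[of a] by simp
  have Nb': "Nb \<in> sets (seq_space X)" using Nb(3) sets_Qf[of b] by simp
  have B: "B \<in> sets (seq_space X)"
    unfolding B_def using Za Zb measurable_sets[OF meas_sh Na'] measurable_sets[OF meas_sh Nb'] by auto
  have "emeasure QQ B = (\<integral>\<^sup>+c. emeasure (NN c) B \<partial>measure_pmf P)"
    unfolding QQ_def by (rule emeasure_bind[OF _ NN_meas' B]) simp
  also have "\<dots> = (\<integral>\<^sup>+c. 0 \<partial>measure_pmf P)"
  proof (rule nn_integral_cong)
    fix c
    let ?d = "gg c"
    have d: "?d \<in> {a,b}" by (rule gg_in)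
    have "emeasure (NN c) B = emeasure (Qf ?d) (pcons ?d -` B \<inter> space (Qf ?d))"
      unfolding NN_def by (rule emeasure_distr[OF pcons_meas_Q B])
    also have "\<dots> = 0"
    proof (cases "?d = a")
      case True
      have "pcons ?d -` B \<inter> space (Qf ?d) \<subseteq> Na"
      proof
        fix w assume w: "w \<in> pcons ?d -` B \<inter> space (Qf ?d)"
        then have "pcons a w \<in> B" using True by simp
        moreover have "pcons a w \<in> Za" using w True measurable_space[OF meas_pcons[OF a], of w] space_Qf[of a] unfolding Za_def by auto
        ultimately show "w \<in> Na" unfolding B_def by auto
      qed
      then show ?thesis using Na(2) Na(3) True emeasure_mono[of _ Na "Qf a"]
        by (metis le_zero_eq)
    next
      case False
      then have db: "?d = b" using d by auto
      have "pcons ?d -` B \<inter> space (Qf ?d) \<subseteq> Nb"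
      proof
        fix w assume w: "w \<in> pcons ?d -` B \<inter> space (Qf ?d)"
        then have "pcons b w \<in> B" using db by simp
        moreover have "pcons b w \<in> Zb - Za" using w db False measurable_space[OF meas_pcons[OF b], of w] space_Qf[of b] unfolding Za_def Zb_def by auto
        ultimately show "w \<in> Nb" unfolding B_def by auto
      qed
      then show ?thesis using Nb(2) Nb(3) db emeasure_mono[of _ Nb "Qf b"]
        by (metis le_zero_eq)
    qed
    finally show "emeasure (NN c) B = 0" .
  qed
  finally have B0: "emeasure QQ B = 0" by simp
  have "{y \<in> space QQ. \<not> R y} \<subseteq> B"
  proof
    fix y assume y: "y \<in> {y \<in> space QQ. \<not> R y}"
    then have yS: "y \<in> ?S" and nR: "\<not> R y" using sets_eq_imp_space_eq[OF sets_QQ] by auto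
    have shy: "sh y \<in> ?S" using measurable_space[OF meas_sh yS] .
    show "y \<in> B"
    proof (cases "y 0 = a")
      case True
      then have "\<not> R (pcons a (sh y))" using nR pcons_sh[of y] by simp
      then have "sh y \<in> Na" using Na(1) shy space_Qf[of a] by auto
      then show ?thesis using True yS unfolding B_def Za_def by auto
    next
      case False
      show ?thesis
      proof (cases "y 0 = b")
        case True
        then have "\<not> R (pcons b (sh y))" using nR pcons_sh[of y] by simp
        then have "sh y \<in> Nb" using Nb(1) shy space_Qf[of b] by auto
        then show ?thesis using True False yS unfolding B_def Za_def Zb_def by auto
      qed (use False yS in \<open>auto simp: B_def Za_def Zb_def\<close>)
    qed
  qed
  then show ?thesis using B0 B sets_QQ by (intro AE_I) auto
qed

lemma good_K0: "good X \<mu> K0"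
proof -
  have "(\<integral>x. x \<partial>K0) = (\<integral>c. gg c \<partial>measure_pmf P)"
    unfolding K0_def by (rule integral_distr[OF gg_meas]) (unfold obs_space_def, intro measurable_restrict_space1, simp)
  also have "\<dots> = (\<integral>c. c \<partial>measure_pmf P)"
    by (rule integral_cong_AE) (auto simp: AE_measure_pmf_iff gg_supp)
  finally have m: "(\<integral>x. x \<partial>K0) = \<mu>" using mean by simp
  have s: "space (obs_space X) - {a, b} \<in> sets (obs_space X)"
    using singleton_obs[OF a] singleton_obs[OF b]
    by (metis Diff_insert sets.Diff sets.top)
  have "emeasure K0 (space (obs_space X) - {a, b}) = emeasure (measure_pmf P) (gg -` (space (obs_space X) - {a, b}) \<inter> space (measure_pmf P))"
    unfolding K0_def by (rule emeasure_distr[OF gg_meas s])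
  also have "gg -` (space (obs_space X) - {a, b}) \<inter> space (measure_pmf P) = {}"
    using gg_in by auto
  finally show ?thesis using m unfolding good_def by auto
qed

lemma QQ_hyp: "QQ \<in> hyp_class X \<mu>"
proof -
  have ae: "AE y in QQ. good X \<mu> (KK t (pref t y))" for t
  proof (cases t)
    case 0
    then show ?thesis using good_K0 by (simp add: KK_def)
  next
    case (Suc s)
    have R: "good X \<mu> (KK (Suc s) (pref (Suc s) (pcons c w))) = good X \<mu> (Kf c s (pref s w))" if "c \<in> {a,b}" for c w
    proof -
      have "shp s (pref (Suc s) (pcons c w)) = pref s w"
        using pref_sh[of s "pcons c w"] by simp
      moreover have "pref (Suc s) (pcons c w) 0 = c" by (simp add: pref_def)
      ultimately show ?thesis using that by (auto simp: KK_def)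
    qed
    show ?thesis unfolding Suc
      by (rule AE_QQ) (use Kae R in auto)
  qed
  show ?thesis unfolding hyp_class_def
    using QQ_in KK_meas eqAll ae unfolding good_def by blast
qed


lemma stopped_pcons: "c \<in> {a,b} \<Longrightarrow>
  stopped E (tmix a (\<tau>f a) (\<tau>f b)) (pcons c w) = stopped (shifted E c) (\<tau>f c) w"
  by (auto simp: stopped_def tmix_def shifted_def pref_pcons_shifted)

lemma mix_bound:
  assumes E: "e_process X \<mu> E"
  shows "(\<integral>\<^sup>+c. (\<integral>\<^sup>+w. ennreal (stopped (shifted E c) (\<tau>f c) w) \<partial>Qf c) \<partial>measure_pmf P) \<le> 1"
proof -
  let ?t = "tmix a (\<tau>f a) (\<tau>f b)"
  have t: "?t \<in> stopping_times X" by (rule tmix_st[OF a tst tst]) auto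
  have Em: "\<And>t. E t \<in> borel_measurable (prefix_space X t)" using E by (simp add: e_process_def)
  have fm: "(\<lambda>y. ennreal (stopped E ?t y)) \<in> borel_measurable (seq_space X)"
    by (rule measurable_compose[OF meas_stopped[OF t Em] measurable_ennreal])
  have "(\<integral>\<^sup>+y. ennreal (stopped E ?t y) \<partial>QQ) = (\<integral>\<^sup>+c. (\<integral>\<^sup>+y. ennreal (stopped E ?t y) \<partial>NN c) \<partial>measure_pmf P)"
    unfolding QQ_def by (rule nn_integral_bind[OF fm NN_meas'])
  also have "\<dots> = (\<integral>\<^sup>+c. (\<integral>\<^sup>+w. ennreal (stopped (shifted E (gg c)) (\<tau>f (gg c)) w) \<partial>Qf (gg c)) \<partial>measure_pmf P)"
  proof (rule nn_integral_cong)
    fix c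
    have "(\<integral>\<^sup>+y. ennreal (stopped E ?t y) \<partial>NN c) = (\<integral>\<^sup>+w. ennreal (stopped E ?t (pcons (gg c) w)) \<partial>Qf (gg c))"
      unfolding NN_def by (rule nn_integral_distr[OF pcons_meas_Q]) (use fm in \<open>simp cong: measurable_cong_sets\<close>)
    also have "\<dots> = (\<integral>\<^sup>+w. ennreal (stopped (shifted E (gg c)) (\<tau>f (gg c)) w) \<partial>Qf (gg c))"
      using stopped_pcons[OF gg_in] by simp
    finally show "(\<integral>\<^sup>+y. ennreal (stopped E ?t y) \<partial>NN c) = (\<integral>\<^sup>+w. ennreal (stopped (shifted E (gg c)) (\<tau>f (gg c)) w) \<partial>Qf (gg c))" .
  qed
  also have "\<dots> = (\<integral>\<^sup>+c. (\<integral>\<^sup>+w. ennreal (stopped (shifted E c) (\<tau>f c) w) \<partial>Qf c) \<partial>measure_pmf P)"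
    by (rule nn_integral_cong_AE) (auto simp: AE_measure_pmf_iff gg_supp)
  finally show ?thesis using E QQ_hyp t unfolding e_process_def by metis
qed

end

lemma key2:
  assumes E: "e_process X \<mu> E" and a: "a \<in> X" and b: "b \<in> X" and ab: "a \<le> b"
    and p: "0 \<le> p" "p \<le> 1" and m: "p * a + (1 - p) * b = \<mu>"
    and ta: "ta \<in> stopping_times X" and tb: "tb \<in> stopping_times X"
    and Qa: "Qa \<in> hyp_class X \<mu>" and Qb: "Qb \<in> hyp_class X \<mu>"
  shows "ennreal p * (\<integral>\<^sup>+w. ennreal (stopped (shifted E a) ta w) \<partial>Qa)
       + ennreal (1 - p) * (\<integral>\<^sup>+w. ennreal (stopped (shifted E b) (if b = a then ta else tb) w) \<partial>(if b = a then Qa else Qb)) \<le> 1"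
proof -
  obtain Ka where Ka: "Qa \<in> space (prob_algebra (seq_space X))"
        "\<forall>t. Ka t \<in> prefix_space X t \<rightarrow>\<^sub>M prob_algebra (obs_space X)"
        "\<forall>t. distr Qa (prefix_space X (Suc t)) (pref (Suc t)) =
              bind (distr Qa (prefix_space X t) (pref t))
                   (\<lambda>z. distr (Ka t z) (prefix_space X (Suc t)) (\<lambda>x. z(t := x)))"
        "\<forall>t. AE y in Qa. good X \<mu> (Ka t (pref t y))"
    using hyp_class_D[OF Qa] unfolding good_def by blast
  obtain Kb where Kb: "Qb \<in> space (prob_algebra (seq_space X))"
        "\<forall>t. Kb t \<in> prefix_space X t \<rightarrow>\<^sub>M prob_algebra (obs_space X)"
        "\<forall>t. distr Qb (prefix_space X (Suc t)) (pref (Suc t)) =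
              bind (distr Qb (prefix_space X t) (pref t))
                   (\<lambda>z. distr (Kb t z) (prefix_space X (Suc t)) (\<lambda>x. z(t := x)))"
        "\<forall>t. AE y in Qb. good X \<mu> (Kb t (pref t y))"
    using hyp_class_D[OF Qb] unfolding good_def by blast
  define P where "P = map_pmf (\<lambda>\<beta>. if \<beta> then a else b) (bernoulli_pmf p)"
  define Qf where "Qf c = (if c = a then Qa else Qb)" for c
  define Kf where "Kf c = (if c = a then Ka else Kb)" for c
  define tf where "tf c = (if c = a then ta else tb)" for c
  have supp: "set_pmf P \<subseteq> {a, b}" unfolding P_def by auto
  have mean: "(\<integral>c. c \<partial>measure_pmf P) = \<mu>" unfolding P_def using p m by (simp add: mult.commute)
  have "(\<integral>\<^sup>+c. (\<integral>\<^sup>+w. ennreal (stopped (shifted E c) (tf c) w) \<partial>Qf c) \<partial>measure_pmf P) \<le> 1"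
    apply (rule mix_bound[of a X b P \<mu> Qf Kf tf E])
    subgoal by (rule a)
    subgoal by (rule b)
    subgoal by (rule supp)
    subgoal by (rule mean)
    subgoal for c using Ka(1) Kb(1) by (cases "c = a") (auto simp: Qf_def)
    subgoal for c t using Ka(2) Kb(2) by (cases "c = a") (auto simp: Kf_def)
    subgoal for c t using Ka(3) Kb(3) by (cases "c = a") (auto simp: Qf_def Kf_def)
    subgoal for c t
    proof (cases "c = a")
      case True then have "Qf c = Qa" "Kf c = Ka" by (simp_all add: Qf_def Kf_def)
      then show ?thesis using Ka(4) by metis
    next
      case False then have "Qf c = Qb" "Kf c = Kb" by (simp_all add: Qf_def Kf_def)
      then show ?thesis using Kb(4) by metis
    qed
    subgoal for c using ta tb by (cases "c = a") (auto simp: tf_def)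
    subgoal by (rule E)
    done
  then show ?thesis unfolding P_def using p
    by (simp add: Qf_def tf_def mult.commute)
qed


lemma R1: "(\<mu>::real) > 0 \<Longrightarrow> b > \<mu> \<Longrightarrow> \<mu> * v \<le> b \<Longrightarrow> (v - 1)/(b - \<mu>) \<le> 1/\<mu>"
  by (simp add: divide_le_eq field_simps)
lemma R2: "(\<mu>::real) < 1 \<Longrightarrow> x < \<mu> \<Longrightarrow> (1 - \<mu>) * u \<le> 1 - x \<Longrightarrow> 1/(\<mu> - 1) \<le> (1 - u)/(\<mu> - x)"
  by (simp add: divide_le_eq le_divide_eq field_simps)
lemma R3: "(x::real) < \<mu> \<Longrightarrow> \<mu> < b \<Longrightarrow> (b - \<mu>) * u + (\<mu> - x) * v \<le> b - x \<Longrightarrow> (v - 1)/(b - \<mu>) \<le> (1 - u)/(\<mu> - x)"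
  by (simp add: divide_le_eq le_divide_eq field_simps)
lemma R4: "(x::real) > \<mu> \<Longrightarrow> (u - 1)/(x - \<mu>) \<le> l \<Longrightarrow> u \<le> 1 + l * (x - \<mu>)"
  by (simp add: divide_le_eq field_simps)
lemma R5: "(x::real) < \<mu> \<Longrightarrow> l \<le> (1 - u)/(\<mu> - x) \<Longrightarrow> u \<le> 1 + l * (x - \<mu>)"
  by (simp add: le_divide_eq field_simps)

definition II where "II E x \<tau> Q = (\<integral>\<^sup>+w. ennreal (stopped (shifted E x) \<tau> w) \<partial>Q)"

lemma ennr_fin1: "0 < p \<Longrightarrow> ennreal p * A + C \<le> 1 \<Longrightarrow> A \<noteq> \<top>"
  by (auto simp: ennreal_mult_eq_top_iff top_unique)

lemma ennr_fin2: "0 < q \<Longrightarrow> C + ennreal q * A \<le> 1 \<Longrightarrow> A \<noteq> \<top>"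
  by (auto simp: ennreal_mult_eq_top_iff top_unique)

lemma ennr_aux: "0 \<le> p \<Longrightarrow> p \<le> 1 \<Longrightarrow> ennreal p * A + ennreal (1-p) * B \<le> 1 \<Longrightarrow> A \<noteq> \<top> \<Longrightarrow> B \<noteq> \<top>
   \<Longrightarrow> p * enn2real A + (1-p) * enn2real B \<le> 1"
proof -
  assume p: "0 \<le> p" "p \<le> 1" and h: "ennreal p * A + ennreal (1-p) * B \<le> 1" and A: "A \<noteq> \<top>" and B: "B \<noteq> \<top>"
  have "ennreal p * A + ennreal (1-p) * B = ennreal (p * enn2real A + (1-p) * enn2real B)"
    using p A B by (simp add: ennreal_mult ennreal_plus ennreal_enn2real_if)
  then show ?thesis using h by simp
qed

context
  fixes X :: "real set" and \<mu> :: real and E :: "nat \<Rightarrow> (nat \<Rightarrow> real) \<Rightarrow> real"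
  assumes X01: "X \<subseteq> {0..1}" and X0: "0 \<in> X" and X1: "1 \<in> X"
    and mu: "0 < \<mu>" "\<mu> < 1" and E: "e_process X \<mu> E"
begin

lemma key3:
  assumes a: "a \<in> X" and b: "b \<in> X" and ab: "a < b"
    and p: "0 \<le> p" "p \<le> 1" and m: "p * a + (1 - p) * b = \<mu>"
    and ta: "ta \<in> stopping_times X" and tb: "tb \<in> stopping_times X"
    and Qa: "Qa \<in> hyp_class X \<mu>" and Qb: "Qb \<in> hyp_class X \<mu>"
  shows "ennreal p * II E a ta Qa + ennreal (1 - p) * II E b tb Qb \<le> 1"
  using key2[OF E a b _ p m ta tb Qa Qb] ab unfolding II_def by simp

lemma fin: "x \<in> X \<Longrightarrow> \<tau> \<in> stopping_times X \<Longrightarrow> Q \<in> hyp_class X \<mu> \<Longrightarrow> II E x \<tau> Q \<noteq> \<top>"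
proof -
  assume x: "x \<in> X" and t: "\<tau> \<in> stopping_times X" and Q: "Q \<in> hyp_class X \<mu>"
  show ?thesis
  proof (cases "x < \<mu>")
    case True
    define p where "p = (1 - \<mu>) / (1 - x)"
    have x1: "x < 1" using True mu by simp
    have p: "0 < p" "p \<le> 1" using x1 True mu by (auto simp: p_def)
    have e: "p * (1 - x) = 1 - \<mu>" using x1 by (simp add: p_def)
    then have "p - p * x = 1 - \<mu>" by (simp add: algebra_simps)
    then have m0: "p * x + (1 - p) = \<mu>" by linarith
    then have m: "p * x + (1 - p) * 1 = \<mu>" by simp
    show ?thesis using key3[OF x X1 x1 _ p(2) m t t Q Q] p by (intro ennr_fin1[OF p(1)]) auto
  next
    case False
    then have x0: "0 < x" using mu by simp
    define p where "p = (x - \<mu>) / x"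
    have p: "0 \<le> p" "p \<le> 1" "0 < 1 - p" using x0 False mu by (auto simp: p_def field_simps)
    have m: "p * 0 + (1 - p) * x = \<mu>" using x0 by (simp add: p_def field_simps)
    show ?thesis using key3[OF X0 x x0 p(1,2) m t t Q Q] by (intro ennr_fin2[OF p(3)])
  qed
qed

definition "rr x \<tau> Q = enn2real (II E x \<tau> Q)"

lemma rr_nonneg: "0 \<le> rr x \<tau> Q" by (simp add: rr_def)

lemma II_rr: "x \<in> X \<Longrightarrow> \<tau> \<in> stopping_times X \<Longrightarrow> Q \<in> hyp_class X \<mu> \<Longrightarrow> II E x \<tau> Q = ennreal (rr x \<tau> Q)"
  using fin by (simp add: rr_def ennreal_enn2real_if)

lemma pairR:
  assumes a: "a \<in> X" and b: "b \<in> X" and ab: "a < b" and am: "a \<le> \<mu>" and bm: "\<mu> \<le> b"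
    and ta: "ta \<in> stopping_times X" and tb: "tb \<in> stopping_times X"
    and Qa: "Qa \<in> hyp_class X \<mu>" and Qb: "Qb \<in> hyp_class X \<mu>"
  shows "(b - \<mu>) * rr a ta Qa + (\<mu> - a) * rr b tb Qb \<le> b - a"
proof -
  define p where "p = (b - \<mu>) / (b - a)"
  have p: "0 \<le> p" "p \<le> 1" using ab am bm by (auto simp: p_def field_simps)
  have p1: "1 - p = (\<mu> - a) / (b - a)" using ab by (simp add: p_def field_simps)
  have e: "p * (b - a) = b - \<mu>" using ab by (simp add: p_def)
  then have "p * b - p * a = b - \<mu>" by (simp add: algebra_simps)
  then have m: "p * a + (1 - p) * b = \<mu>" by (simp add: algebra_simps)
  have "p * rr a ta Qa + (1 - p) * rr b tb Qb \<le> 1"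
    unfolding rr_def by (rule ennr_aux[OF p key3[OF a b ab p m ta tb Qa Qb] fin[OF a ta Qa] fin[OF b tb Qb]])
  then have L: "(b - a) * (p * rr a ta Qa + (1 - p) * rr b tb Qb) \<le> (b - a) * 1"
    using ab by (intro mult_left_mono) auto
  have Eq: "(b - a) * (p * rr a ta Qa + (1 - p) * rr b tb Qb) = (b - \<mu>) * rr a ta Qa + (\<mu> - a) * rr b tb Qb"
  proof -
    have e2: "(b - a) * (1 - p) = \<mu> - a" using ab unfolding p1 by simp
    have "(b - a) * (p * rr a ta Qa + (1 - p) * rr b tb Qb) = (p * (b - a)) * rr a ta Qa + ((b - a) * (1 - p)) * rr b tb Qb"
      by algebra
    also have "\<dots> = (b - \<mu>) * rr a ta Qa + (\<mu> - a) * rr b tb Qb" by (simp only: e e2)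
    finally show ?thesis .
  qed
  from L show ?thesis unfolding Eq mult_1_right .
qed

lemma muR:
  assumes x: "\<mu> \<in> X" and t: "\<tau> \<in> stopping_times X" and Q: "Q \<in> hyp_class X \<mu>"
  shows "rr \<mu> \<tau> Q \<le> 1"
proof -
  have "ennreal 1 * II E \<mu> \<tau> Q + ennreal (1 - 1) * II E \<mu> \<tau> Q \<le> 1"
    using key2[where p=1, OF E x x order.refl _ _ _ t t Q Q] unfolding II_def by simp
  then have "II E \<mu> \<tau> Q \<le> 1" by simp
  then have "ennreal (rr \<mu> \<tau> Q) \<le> 1" using II_rr[OF x t Q] by simp
  then show ?thesis by simp
qed


lemma final:
  "\<exists>l1 \<in> {1 / (\<mu> - 1) .. 1 / \<mu>}.
     \<forall>\<tau> \<in> stopping_times X. \<forall>Q \<in> hyp_class X \<mu>. \<forall>x \<in> X. II E x \<tau> Q \<le> ennreal (1 + l1 * (x - \<mu>))"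
proof -
  define L where "L = {(rr b \<tau> Q - 1) / (b - \<mu>) | b \<tau> Q. b \<in> X \<and> \<mu> < b \<and> \<tau> \<in> stopping_times X \<and> Q \<in> hyp_class X \<mu>}"
  define l1 where "l1 = Sup (insert (1 / (\<mu> - 1)) L)"
  have Lb: "y \<le> 1 / \<mu>" if yL: "y \<in> L" for y
  proof -
    obtain b \<tau> Q where y: "y = (rr b \<tau> Q - 1) / (b - \<mu>)" and b: "b \<in> X" "\<mu> < b"
      and t: "\<tau> \<in> stopping_times X" and Q: "Q \<in> hyp_class X \<mu>"
      using yL unfolding L_def by blast
    have "(b - \<mu>) * rr 0 \<tau> Q + (\<mu> - 0) * rr b \<tau> Q \<le> b - 0"
      by (rule pairR[OF X0 b(1) _ _ _ t t Q Q]) (use b mu in auto)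
    moreover have "0 \<le> (b - \<mu>) * rr 0 \<tau> Q" using b rr_nonneg by simp
    ultimately have "\<mu> * rr b \<tau> Q \<le> b" by simp
    then show ?thesis unfolding y using R1 mu b by blast
  qed
  have m1: "1 / (\<mu> - 1) \<le> 1 / \<mu>" using mu by (simp add: divide_le_eq)
  have bdd: "bdd_above (insert (1 / (\<mu> - 1)) L)"
    using Lb m1 by (intro bdd_aboveI[of _ "1 / \<mu>"]) auto
  have l1_lo: "1 / (\<mu> - 1) \<le> l1" unfolding l1_def by (rule cSup_upper[OF insertI1 bdd])
  have l1_hi: "l1 \<le> 1 / \<mu>" unfolding l1_def by (rule cSup_least) (use Lb m1 in auto)
  have main: "II E x \<tau> Q \<le> ennreal (1 + l1 * (x - \<mu>))"
    if x: "x \<in> X" and t: "\<tau> \<in> stopping_times X" and Q: "Q \<in> hyp_class X \<mu>" for x \<tau> Q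
  proof -
    let ?u = "rr x \<tau> Q"
    have "?u \<le> 1 + l1 * (x - \<mu>)"
    proof (cases "\<mu> < x")
      case True
      then have "(?u - 1) / (x - \<mu>) \<in> L" unfolding L_def using x t Q by blast
      then have "(?u - 1) / (x - \<mu>) \<le> l1" unfolding l1_def by (intro cSup_upper bdd) auto
      then show ?thesis using R4 True by blast
    next
      case False
      show ?thesis
      proof (cases "x = \<mu>")
        case True
        then show ?thesis using muR[OF _ t Q] x by simp
      next
        case False
        then have xm: "x < \<mu>" using \<open>\<not> \<mu> < x\<close> by simp
        have "l1 \<le> (1 - ?u) / (\<mu> - x)"
          unfolding l1_def
        proof (rule cSup_least)
          fix y assume "y \<in> insert (1 / (\<mu> - 1)) L"
          then show "y \<le> (1 - ?u) / (\<mu> - x)"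
          proof
            assume y: "y = 1 / (\<mu> - 1)"
            have "(1 - \<mu>) * ?u + (\<mu> - x) * rr 1 \<tau> Q \<le> 1 - x"
              by (rule pairR[OF x X1 _ _ _ t t Q Q]) (use xm mu in auto)
            moreover have "0 \<le> (\<mu> - x) * rr 1 \<tau> Q" using xm rr_nonneg by simp
            ultimately have "(1 - \<mu>) * ?u \<le> 1 - x" by simp
            then show ?thesis unfolding y using R2 mu xm by blast
          next
            assume "y \<in> L"
            then obtain b \<tau>' Q' where y: "y = (rr b \<tau>' Q' - 1) / (b - \<mu>)" and b: "b \<in> X" "\<mu> < b"
              and t': "\<tau>' \<in> stopping_times X" and Q': "Q' \<in> hyp_class X \<mu>"
              unfolding L_def by blast
            have "(b - \<mu>) * ?u + (\<mu> - x) * rr b \<tau>' Q' \<le> b - x"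
              by (rule pairR[OF x b(1) _ _ _ t t' Q Q']) (use xm b in auto)
            then show ?thesis unfolding y using R3 xm b by blast
          qed
        qed auto
        then show ?thesis using R5 xm by blast
      qed
    qed
    then show ?thesis using II_rr[OF x t Q] by (simp add: ennreal_leI)
  qed
  have "l1 \<in> {1 / (\<mu> - 1) .. 1 / \<mu>}" using l1_lo l1_hi by simp
  moreover have "\<forall>\<tau> \<in> stopping_times X. \<forall>Q \<in> hyp_class X \<mu>. \<forall>x \<in> X. II E x \<tau> Q \<le> ennreal (1 + l1 * (x - \<mu>))"
    using main by blast
  ultimately show ?thesis by blast
qed

end

theorem lemma5:
  fixes X :: "real set" and \<mu> :: real
    and E :: "nat \<Rightarrow> (nat \<Rightarrow> real) \<Rightarrow> real"
  assumes "X \<in> sets borel" and "X \<subseteq> {0..1}" and "0 \<in> X" and "1 \<in> X"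
    and "0 < \<mu>" and "\<mu> < 1"
    and "e_process X \<mu> E"
  shows "\<exists>l1 \<in> {1 / (\<mu> - 1) .. 1 / \<mu>}.
           \<forall>\<tau> \<in> stopping_times X. \<forall>Q \<in> hyp_class X \<mu>. \<forall>x \<in> X.
             (\<integral>\<^sup>+ y. ennreal (stopped (shifted E x) \<tau> y) \<partial>Q) \<le> ennreal (1 + l1 * (x - \<mu>))"
  using final[OF assms(2-7)] unfolding II_def .

end
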